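(* Fix $\rho\in(0,1)$. For each $n$ let $X=(X_1,\dots,X_n)'$ be jointly normal with $E[X_i]=0$, $E[X_i^2]=1$ and $\operatorname{Corr}(X_i,X_j)=\rho$ for $i\neq j$, and let $M_n(|X|)=\max_{1\le i\le n}|X_i|$. Let $\widehat\rho=\widehat\rho_n$ be an estimator (a measurable function of $X$ with values in $[0,1)$) satisfying $$\sqrt{2\ln n}\,\left(\sqrt{1-\rho}-\sqrt{1-\widehat\rho}\right)\xrightarrow[n\to\infty]{P}0 .$$ Then $$\left|\int_{-\infty}^{\infty}\Big(\Psi^n_{\sqrt{\rho}z,\sqrt{1-\rho}}\big(M_n(|X|)\big)-\Psi^n_{\sqrt{\widehat\rho}z,\sqrt{1-\widehat\rho}}\big(M_n(|X|)\big)\Big)\phi(z)\,dz\right|\xrightarrow[n\to\infty]{P}0.$$ Consequently $p_0(\rho)-p_0(\widehat\rho)\xrightarrow{P}0$, where $p_0(r)=1-\int_{-\infty}^{\infty}\Psi^n_{\sqrt{r}z,\sqrt{1-r}}\big(M_n(|X|)\big)\phi(z)\,dz$ for $r\in[0,1)$.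
   Context: $\Psi_{\mu,\sigma}$ denotes the cumulative distribution function of the folded normal distribution: $\Psi_{\mu,\sigma}(x)=P(|Y|\le x)$ where $Y\sim N(\mu,\sigma^2)$; $\Psi^n$ denotes its $n$-th power. $\phi$ is the standard normal density. The correlation $\rho$ does not depend on $n$. *)

theory Defs
  imports "HOL-Probability.Probability"
begin

definition conv_in_prob_zero :: "'a measure \<Rightarrow> (nat \<Rightarrow> 'a \<Rightarrow> real) \<Rightarrow> bool" where
  "conv_in_prob_zero M Y \<longleftrightarrow>
     (\<forall>e>0. (\<lambda>n. measure M {\<omega> \<in> space M. \<bar>Y n \<omega>\<bar> > e}) \<longlonglongrightarrow> 0)"

definition gaussian_rv :: "'a measure \<Rightarrow> ('a \<Rightarrow> real) \<Rightarrow> real \<Rightarrow> real \<Rightarrow> bool" where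
  "gaussian_rv M Y mu v \<longleftrightarrow> Y \<in> borel_measurable M \<and>
     ((v > 0 \<and> distributed M lborel Y (normal_density mu (sqrt v))) \<or>
      (v = 0 \<and> (AE \<omega> in M. Y \<omega> = mu)))"

definition equicorr_gaussian ::
  "'a measure \<Rightarrow> nat \<Rightarrow> real \<Rightarrow> ('a \<Rightarrow> nat \<Rightarrow> real) \<Rightarrow> bool" where
  "equicorr_gaussian M n rho X \<longleftrightarrow>
     (\<forall>i\<in>{1..n}. (\<lambda>\<omega>. X \<omega> i) \<in> borel_measurable M) \<and>
     (\<forall>c :: nat \<Rightarrow> real. gaussian_rv M (\<lambda>\<omega>. \<Sum>i=1..n. c i * X \<omega> i) 0
        (\<Sum>i=1..n. \<Sum>j=1..n. c i * c j * (if i = j then 1 else rho)))"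

definition folded_normal_cdf :: "real \<Rightarrow> real \<Rightarrow> real \<Rightarrow> real" where
  "folded_normal_cdf mu s x =
     measure (density lborel (normal_density mu s)) {y. \<bar>y\<bar> \<le> x}"

definition max_abs :: "nat \<Rightarrow> (nat \<Rightarrow> real) \<Rightarrow> real" where
  "max_abs n x = Max ((\<lambda>i. \<bar>x i\<bar>) ` {1..n})"

definition mix_integral :: "nat \<Rightarrow> real \<Rightarrow> real \<Rightarrow> real" where
  "mix_integral n r m =
     (\<integral>z. (folded_normal_cdf (sqrt r * z) (sqrt (1 - r)) m) ^ n * std_normal_density z \<partial>lborel)"

definition p0 :: "nat \<Rightarrow> real \<Rightarrow> real \<Rightarrow> real" where
  "p0 n r m = 1 - mix_integral n r m"

end

theory Submission
  imports Defs
begin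

definition NN :: "real measure" where "NN = density lborel std_normal_density"

lemma prob_NN: "prob_space NN"
  unfolding NN_def by (rule prob_space_normal_density) simp

lemma space_NN[simp]: "space NN = UNIV" unfolding NN_def by simp
lemma sets_NN[simp, measurable_cong]: "sets NN = sets borel" unfolding NN_def by simp

lemma integral_NN:
  assumes [measurable]: "f \<in> borel_measurable borel"
  shows "integral\<^sup>L NN f = (\<integral>x. std_normal_density x * f x \<partial>lborel)"
  unfolding NN_def by (subst integral_density) auto

lemma folded_eq:
  assumes "0 < \<sigma>"
  shows "folded_normal_cdf \<mu> \<sigma> m = measure NN {x. \<bar>\<mu> + \<sigma> * x\<bar> \<le> m}"
proof -
  interpret prob_space NN by (rule prob_NN)
  have d0: "distributed NN lborel (\<lambda>x. x) std_normal_density"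
    unfolding distributed_def by (auto simp: distr_id2 NN_def)
  have "distributed NN lborel (\<lambda>x. \<mu> + \<sigma> * x) (normal_density (\<mu> + \<sigma> * 0) (\<bar>\<sigma>\<bar> * 1))"
    by (rule normal_density_affine[OF d0]) (use assms in auto)
  then have d: "distributed NN lborel (\<lambda>x. \<mu> + \<sigma> * x) (normal_density \<mu> \<sigma>)"
    using assms by simp
  have "density lborel (normal_density \<mu> \<sigma>) = distr NN lborel (\<lambda>x. \<mu> + \<sigma> * x)"
    using distributed_distr_eq_density[OF d] by simp
  then show ?thesis unfolding folded_normal_cdf_def
    by (simp add: measure_distr)
qed

lemma meas_Pz[measurable]:
  "(\<lambda>z. measure NN {x. \<bar>a * z + s * x\<bar> \<le> m}) \<in> borel_measurable borel"
proof -
  interpret prob_space NN by (rule prob_NN)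
  show ?thesis
  proof (rule measurable_measure)
    have "{z \<in> space (borel \<Otimes>\<^sub>M borel). \<bar>a * fst z + s * snd z\<bar> \<le> (m::real)} \<in> sets (borel \<Otimes>\<^sub>M borel)"
      by measurable
    then show "{x \<in> space (borel \<Otimes>\<^sub>M NN). snd x \<in> {y. \<bar>a * fst x + s * y\<bar> \<le> m}} \<in> sets (borel \<Otimes>\<^sub>M NN)"
      by (simp add: space_pair_measure sets_pair_measure_cong[OF refl sets_NN])
  qed auto
qed

lemma mix_eq:
  assumes "0 \<le> r" "r < 1"
  shows "mix_integral n r m = integral\<^sup>L NN (\<lambda>z. (measure NN {x. \<bar>sqrt r * z + sqrt (1 - r) * x\<bar> \<le> m}) ^ n)"
proof -
  have s: "0 < sqrt (1 - r)" using assms by simp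
  have meas: "(\<lambda>z. (measure NN {x. \<bar>sqrt r * z + sqrt (1 - r) * x\<bar> \<le> m}) ^ n) \<in> borel_measurable borel"
    by measurable
  show ?thesis
    unfolding mix_integral_def folded_eq[OF s] integral_NN[OF meas]
    by (simp add: mult.commute)
qed

lemma tail_pt:
  fixes T x :: real
  assumes "0 \<le> T" "T \<le> x"
  shows "std_normal_density x \<le> exp (- T\<^sup>2 / 2) * normal_density T 1 x"
proof -
  have "- x\<^sup>2 / 2 \<le> - T\<^sup>2 / 2 + (- (x - T)\<^sup>2 / 2)"
    using assms by (simp add: power2_eq_square algebra_simps mult_left_mono)
  then have "exp (- x\<^sup>2 / 2) \<le> exp (- T\<^sup>2 / 2) * exp (- (x - T)\<^sup>2 / 2)"
    by (simp add: exp_add[symmetric])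
  then show ?thesis
    unfolding normal_density_def by (simp add: divide_right_mono)
qed

lemma tail_pt2:
  fixes T x :: real
  assumes "0 \<le> T" "x \<le> -T"
  shows "std_normal_density x \<le> exp (- T\<^sup>2 / 2) * normal_density (-T) 1 x"
proof -
  have "T * (T + x) \<le> 0" using assms by (intro mult_nonneg_nonpos) auto
  then have "- x\<^sup>2 / 2 \<le> - T\<^sup>2 / 2 + (- (x + T)\<^sup>2 / 2)"
    by (simp add: power2_eq_square algebra_simps)
  then have "exp (- x\<^sup>2 / 2) \<le> exp (- T\<^sup>2 / 2) * exp (- (x + T)\<^sup>2 / 2)"
    by (simp add: exp_add[symmetric])
  then show ?thesis
    unfolding normal_density_def by (simp add: divide_right_mono)
qed

lemma measure_NN_integral:
  assumes "A \<in> sets borel"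
  shows "measure NN A = (\<integral>x. std_normal_density x * indicator A x \<partial>lborel)"
proof -
  have "measure NN A = integral\<^sup>L NN (indicator A)" by simp
  also have "\<dots> = (\<integral>x. std_normal_density x * indicator A x \<partial>lborel)"
    using assms by (subst integral_NN) auto
  finally show ?thesis .
qed

lemma tail_up:
  assumes "0 \<le> T"
  shows "measure NN {x. T \<le> x} \<le> exp (- T\<^sup>2 / 2)"
proof -
  have "measure NN {x. T \<le> x} = (\<integral>x. std_normal_density x * indicator {x. T \<le> x} x \<partial>lborel)"
    by (rule measure_NN_integral) simp
  also have "\<dots> \<le> (\<integral>x. exp (- T\<^sup>2 / 2) * normal_density T 1 x \<partial>lborel)"
    by (rule integral_mono') (use tail_pt[OF assms] in \<open>auto split: split_indicator\<close>)
  also have "\<dots> = exp (- T\<^sup>2 / 2)" by simp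
  finally show ?thesis .
qed

lemma tail_lo:
  assumes "0 \<le> T"
  shows "measure NN {x. x \<le> -T} \<le> exp (- T\<^sup>2 / 2)"
proof -
  have "measure NN {x. x \<le> -T} = (\<integral>x. std_normal_density x * indicator {x. x \<le> -T} x \<partial>lborel)"
    by (rule measure_NN_integral) simp
  also have "\<dots> \<le> (\<integral>x. exp (- T\<^sup>2 / 2) * normal_density (-T) 1 x \<partial>lborel)"
    by (rule integral_mono') (use tail_pt2[OF assms] in \<open>auto split: split_indicator\<close>)
  also have "\<dots> = exp (- T\<^sup>2 / 2)" by simp
  finally show ?thesis .
qed

lemma tail_abs:
  assumes "0 \<le> T"
  shows "measure NN {x. T < \<bar>x\<bar>} \<le> 2 * exp (- T\<^sup>2 / 2)"
proof -
  interpret prob_space NN by (rule prob_NN)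
  have "measure NN {x. T < \<bar>x\<bar>} \<le> measure NN ({x. T \<le> x} \<union> {x. x \<le> -T})"
    by (rule finite_measure_mono) auto
  also have "\<dots> \<le> measure NN {x. T \<le> x} + measure NN {x. x \<le> -T}"
    by (rule measure_Un_le) auto
  also have "\<dots> \<le> 2 * exp (- T\<^sup>2 / 2)" using tail_up[OF assms] tail_lo[OF assms] by simp
  finally show ?thesis .
qed

lemma pow_diff_le:
  fixes x y :: real
  assumes "0 \<le> x" "x \<le> y" "y \<le> 1"
  shows "y ^ n - x ^ n \<le> real n * (y - x)"
proof (induction n)
  case 0 then show ?case by simp
next
  case (Suc n)
  have "y ^ Suc n - x ^ Suc n = y * (y ^ n - x ^ n) + x ^ n * (y - x)" by (simp add: algebra_simps)
  also have "\<dots> \<le> 1 * (real n * (y - x)) + 1 * (y - x)"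
  proof (rule add_mono)
    have "0 \<le> y ^ n - x ^ n" using assms by (simp add: power_mono)
    then show "y * (y ^ n - x ^ n) \<le> 1 * (real n * (y - x))"
      using Suc assms by (intro mult_mono) auto
    show "x ^ n * (y - x) \<le> 1 * (y - x)"
      using assms by (intro mult_right_mono) (auto simp: power_le_one)
  qed
  finally show ?case by (simp add: algebra_simps)
qed

lemma pow_le_add:
  fixes x y u :: real
  assumes "0 \<le> x" "x \<le> 1" "0 \<le> y" "y \<le> 1" "0 \<le> u" "y \<le> x + u"
  shows "y ^ n \<le> x ^ n + real n * u"
proof (cases "y \<le> x")
  case True
  then have "y ^ n \<le> x ^ n" using assms by (simp add: power_mono)
  moreover have "0 \<le> real n * u" using assms by simp
  ultimately show ?thesis by linarith
next
  case False
  then have "y ^ n - x ^ n \<le> real n * (y - x)" using assms by (intro pow_diff_le) auto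
  also have "\<dots> \<le> real n * u" using assms by (intro mult_left_mono) auto
  finally show ?thesis by simp
qed

lemma compare_pt:
  assumes "\<bar>z\<bar> \<le> K" "0 \<le> T" "\<bar>a - a'\<bar> * K + \<bar>s - s'\<bar> * T \<le> d"
  shows "measure NN {x. \<bar>a * z + s * x\<bar> \<le> m} \<le> measure NN {x. \<bar>a' * z + s' * x\<bar> \<le> m + d} + measure NN {x. T < \<bar>x\<bar>}"
proof -
  interpret prob_space NN by (rule prob_NN)
  have sub: "{x. \<bar>a * z + s * x\<bar> \<le> m} \<subseteq> {x. \<bar>a' * z + s' * x\<bar> \<le> m + d} \<union> {x. T < \<bar>x\<bar>}"
  proof
    fix x assume x: "x \<in> {x. \<bar>a * z + s * x\<bar> \<le> m}"
    show "x \<in> {x. \<bar>a' * z + s' * x\<bar> \<le> m + d} \<union> {x. T < \<bar>x\<bar>}"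
    proof (cases "\<bar>x\<bar> \<le> T")
      case True
      have "\<bar>a' * z + s' * x\<bar> \<le> \<bar>a * z + s * x\<bar> + \<bar>a - a'\<bar> * \<bar>z\<bar> + \<bar>s - s'\<bar> * \<bar>x\<bar>"
        by (simp add: abs_mult[symmetric]) (smt (verit) abs_triangle_ineq left_diff_distrib)
      also have "\<dots> \<le> m + \<bar>a - a'\<bar> * K + \<bar>s - s'\<bar> * T"
        using x True assms by (intro add_mono mult_left_mono) auto
      finally show ?thesis using assms by auto
    qed auto
  qed
  have "measure NN {x. \<bar>a * z + s * x\<bar> \<le> m} \<le> measure NN ({x. \<bar>a' * z + s' * x\<bar> \<le> m + d} \<union> {x. T < \<bar>x\<bar>})"
    by (rule finite_measure_mono[OF sub]) auto
  also have "\<dots> \<le> measure NN {x. \<bar>a' * z + s' * x\<bar> \<le> m + d} + measure NN {x. T < \<bar>x\<bar>}"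
    by (rule measure_Un_le) auto
  finally show ?thesis .
qed

lemma phi_le_half: "std_normal_density x \<le> 1 / 2"
proof -
  have "2 \<le> sqrt (2 * pi)"
    using pi_gt3 by (simp add: real_le_rsqrt)
  then have "1 / sqrt (2 * pi) \<le> 1 / 2" by (simp add: divide_left_mono)
  moreover have "exp (- x\<^sup>2 / 2) \<le> 1" by simp
  ultimately have "1 / sqrt (2 * pi) * exp (- x\<^sup>2 / 2) \<le> 1 / 2 * 1"
    by (intro mult_mono) auto
  then show ?thesis by (simp add: std_normal_density_def)
qed

lemma phi_shift: "std_normal_density (h + x) = normal_density (-h) 1 x"
  unfolding normal_density_def by (simp add: algebra_simps)

lemma phi_even: "std_normal_density (- x) = std_normal_density x"
  unfolding normal_density_def by simp

lemma shift_le: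
  assumes Gm[measurable]: "G \<in> borel_measurable borel"
    and G0: "\<And>x. 0 \<le> G x" and G1: "\<And>x. G x \<le> 1" and h: "0 \<le> h"
  shows "integral\<^sup>L NN (\<lambda>z. G (z - h)) \<le> integral\<^sup>L NN G + h / 2"
proof -
  have I1: "integrable lborel (\<lambda>x. std_normal_density (h + x) * G x)"
    by (rule Bochner_Integration.integrable_bound[OF integrable_normal_density[of 1 "-h"]])
       (auto simp: phi_shift G0 G1 intro!: mult_left_le)
  have I2: "integrable lborel (\<lambda>x. std_normal_density x * G x)"
    by (rule Bochner_Integration.integrable_bound[OF integrable_normal_density[of 1 0]])
       (auto simp: G0 G1 intro!: mult_left_le)
  have I3: "integrable lborel (\<lambda>x. std_normal_density (h + x) * indicator {..< -h/2} x)"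
    by (rule integrable_real_mult_indicator) (auto simp: phi_shift)
  have I4: "integrable lborel (\<lambda>x. std_normal_density x * indicator {..< -h/2} x)"
    by (rule integrable_real_mult_indicator) auto
  have I5: "integrable lborel (\<lambda>x. std_normal_density x * indicator {..< h/2} x)"
    by (rule integrable_real_mult_indicator) auto
  have "integral\<^sup>L NN (\<lambda>z. G (z - h)) = (\<integral>z. std_normal_density z * G (z - h) \<partial>lborel)"
    by (rule integral_NN) measurable
  also have "\<dots> = (\<integral>x. std_normal_density (h + x) * G x \<partial>lborel)"
    using lborel_integral_real_affine[of 1 "\<lambda>z. std_normal_density z * G (z - h)" h] by simp
  finally have e1: "integral\<^sup>L NN (\<lambda>z. G (z - h)) = (\<integral>x. std_normal_density (h + x) * G x \<partial>lborel)" .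
  have eqv: "\<And>x::real. (x - h < - (h / 2)) = (x * 2 < h)" by auto
  have e2: "integral\<^sup>L NN G = (\<integral>x. std_normal_density x * G x \<partial>lborel)"
    by (rule integral_NN) measurable
  have "(\<integral>x. std_normal_density (h + x) * G x \<partial>lborel) - (\<integral>x. std_normal_density x * G x \<partial>lborel)
      = (\<integral>x. (std_normal_density (h + x) - std_normal_density x) * G x \<partial>lborel)"
    using I1 I2 by (subst Bochner_Integration.integral_diff[symmetric]) (auto simp: algebra_simps)
  also have "\<dots> \<le> (\<integral>x. std_normal_density (h + x) * indicator {..< -h/2} x - std_normal_density x * indicator {..< -h/2} x \<partial>lborel)"
  proof (rule integral_mono)
    show "integrable lborel (\<lambda>x. (std_normal_density (h + x) - std_normal_density x) * G x)"
      using I1 I2 by (simp add: algebra_simps)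
    show "integrable lborel (\<lambda>x. std_normal_density (h + x) * indicator {..< -h/2} x - std_normal_density x * indicator {..< -h/2} x)"
      using I3 I4 by simp
    fix x :: real
    show "(std_normal_density (h + x) - std_normal_density x) * G x
          \<le> std_normal_density (h + x) * indicator {..< -h/2} x - std_normal_density x * indicator {..< -h/2} x"
    proof (cases "x < -h/2")
      case True
      have "h * (h + 2 * x) \<le> 0" using h True by (intro mult_nonneg_nonpos) auto
      then have "(h + x)\<^sup>2 \<le> x\<^sup>2" by (simp add: power2_eq_square algebra_simps)
      then have "std_normal_density x \<le> std_normal_density (h + x)"
        unfolding std_normal_density_def by (intro mult_left_mono) auto
      then have "(std_normal_density (h + x) - std_normal_density x) * G x \<le> (std_normal_density (h + x) - std_normal_density x) * 1"
        using G1 by (intro mult_left_mono) auto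
      then show ?thesis using True by (simp add: algebra_simps)
    next
      case False
      have "0 \<le> h * (h + 2 * x)" using h False by (intro mult_nonneg_nonneg) auto
      then have "x\<^sup>2 \<le> (h + x)\<^sup>2" by (simp add: power2_eq_square algebra_simps)
      then have "std_normal_density (h + x) \<le> std_normal_density x"
        unfolding std_normal_density_def by (intro mult_left_mono) auto
      then have "(std_normal_density (h + x) - std_normal_density x) * G x \<le> 0"
        using G0 by (intro mult_nonpos_nonneg) auto
      then show ?thesis using False by simp
    qed
  qed
  also have "\<dots> = (\<integral>x. std_normal_density (h + x) * indicator {..< -h/2} x \<partial>lborel) - (\<integral>x. std_normal_density x * indicator {..< -h/2} x \<partial>lborel)"
    using I3 I4 by (rule Bochner_Integration.integral_diff)
  also have "(\<integral>x. std_normal_density (h + x) * indicator {..< -h/2} x \<partial>lborel) = (\<integral>x. std_normal_density x * indicator {..< h/2} x \<partial>lborel)"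
    using lborel_integral_real_affine[of 1 "\<lambda>x. std_normal_density (h + x) * indicator {..< -h/2} x" "-h"]
    by (simp add: indicator_def eqv)
  also have "(\<integral>x. std_normal_density x * indicator {..< h/2} x \<partial>lborel) - (\<integral>x. std_normal_density x * indicator {..< -h/2} x \<partial>lborel)
      = (\<integral>x. std_normal_density x * indicator {-h/2..< h/2} x \<partial>lborel)"
  proof -
    have "(\<integral>x. std_normal_density x * indicator {..< h/2} x \<partial>lborel) - (\<integral>x. std_normal_density x * indicator {..< -h/2} x \<partial>lborel)
      = (\<integral>x. std_normal_density x * indicator {..< h/2} x - std_normal_density x * indicator {..< -h/2} x \<partial>lborel)"
      by (rule Bochner_Integration.integral_diff[symmetric, OF I5 I4])
    also have "\<dots> = (\<integral>x. std_normal_density x * indicator {-h/2..< h/2} x \<partial>lborel)"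
      using h by (intro Bochner_Integration.integral_cong) (auto split: split_indicator)
    finally show ?thesis .
  qed
  also have "\<dots> \<le> (\<integral>x. 1 / 2 * indicator {-h/2..< h/2} x \<partial>lborel)"
  proof (rule integral_mono')
    show "integrable lborel (\<lambda>x. 1 / 2 * indicator {-h/2..< h/2} x :: real)"
      using h by (intro integrable_mult_right integrable_real_indicator) (auto simp: emeasure_lborel_Ico)
    fix x :: real
    show "std_normal_density x * indicator {-h/2..< h/2} x \<le> 1 / 2 * indicator {-h/2..< h/2} x"
      using phi_le_half[of x] by (auto split: split_indicator)
    show "0 \<le> 1 / 2 * (indicator {-h/2..< h/2} x :: real)" by (auto split: split_indicator)
  qed
  also have "\<dots> = h / 2" using h by simp
  finally show ?thesis using e1 e2 by simp
qed

lemma reflect_NN: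
  fixes G :: "real \<Rightarrow> real"
  assumes [measurable]: "G \<in> borel_measurable borel"
  shows "integral\<^sup>L NN (\<lambda>z. G (- z)) = integral\<^sup>L NN G"
proof -
  have "integral\<^sup>L NN (\<lambda>z. G (- z)) = (\<integral>z. std_normal_density z * G (- z) \<partial>lborel)"
    by (rule integral_NN) measurable
  also have "\<dots> = (\<integral>x. std_normal_density x * G x \<partial>lborel)"
    using lborel_integral_real_affine[of "-1" "\<lambda>z. std_normal_density z * G (- z)" 0] by (simp add: phi_even)
  also have "\<dots> = integral\<^sup>L NN G" by (rule integral_NN[symmetric]) measurable
  finally show ?thesis .
qed

lemma shift_le2:
  assumes Gm[measurable]: "G \<in> borel_measurable borel"
    and G0: "\<And>x. 0 \<le> G x" and G1: "\<And>x. G x \<le> 1" and h: "0 \<le> h"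
  shows "integral\<^sup>L NN (\<lambda>z. G (z + h)) \<le> integral\<^sup>L NN G + h / 2"
proof -
  have "integral\<^sup>L NN (\<lambda>z. G (z + h)) = integral\<^sup>L NN (\<lambda>z. G (- (z - h)))"
    using reflect_NN[of "\<lambda>z. G (z + h)"] by simp
  also have "\<dots> \<le> integral\<^sup>L NN (\<lambda>z. G (- z)) + h / 2"
    by (rule shift_le[of "\<lambda>z. G (- z)"]) (auto simp: G0 G1 h)
  also have "integral\<^sup>L NN (\<lambda>z. G (- z)) = integral\<^sup>L NN G" by (rule reflect_NN) measurable
  finally show ?thesis .
qed

lemma inc_pow:
  fixes t t' d :: real
  assumes "0 \<le> t" "t \<le> t'" "0 \<le> d"
  shows "(t + d) ^ n - t ^ n \<le> (t' + d) ^ n - t' ^ n \<and> 0 \<le> (t + d) ^ n - t ^ n"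
proof (induction n)
  case 0 then show ?case by simp
next
  case (Suc n)
  have e: "\<And>u. (u + d) ^ Suc n - u ^ Suc n = (u + d) * ((u + d) ^ n - u ^ n) + d * u ^ n"
    by (simp add: algebra_simps)
  have "(t + d) * ((t + d) ^ n - t ^ n) \<le> (t' + d) * ((t' + d) ^ n - t' ^ n)"
    using Suc assms by (intro mult_mono) auto
  moreover have "d * t ^ n \<le> d * t' ^ n" using assms by (intro mult_left_mono power_mono) auto
  moreover have "0 \<le> (t + d) * ((t + d) ^ n - t ^ n)" using Suc assms by simp
  moreover have "0 \<le> d * t ^ n" using assms by simp
  ultimately show ?case unfolding e by linarith
qed

lemma alg_ineq:
  fixes A A' B B' :: real
  assumes "0 \<le> A" "A \<le> A'" "A' \<le> 1" "0 \<le> B" "B \<le> B'" "B' \<le> 1" "1 \<le> n"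
  shows "(max 0 (A' + B' - 1)) ^ n - (max 0 (A + B - 1)) ^ n \<le> (A' ^ n - A ^ n) + (B' ^ n - B ^ n)"
proof -
  have pA: "A ^ n \<le> A' ^ n" and pB: "B ^ n \<le> B' ^ n" using assms by (auto intro: power_mono)
  have z: "(0::real) ^ n = 0" using assms by simp
  show ?thesis
  proof (cases "A' + B' - 1 \<le> 0")
    case True
    then have "A + B - 1 \<le> 0" using assms by simp
    then show ?thesis using True pA pB z by (simp add: max_def)
  next
    case F1: False
    show ?thesis
    proof (cases "1 \<le> A + B")
      case True
      have i1: "(A + B' - 1 + (A' - A)) ^ n - (A + B' - 1) ^ n \<le> (A + (A' - A)) ^ n - A ^ n"
        using inc_pow[of "A + B' - 1" A "A' - A" n] assms True by auto
      have i2: "(A + B - 1 + (B' - B)) ^ n - (A + B - 1) ^ n \<le> (B + (B' - B)) ^ n - B ^ n"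
        using inc_pow[of "A + B - 1" B "B' - B" n] assms True by auto
      show ?thesis using i1 i2 True F1 by (simp add: max_def algebra_simps)
    next
      case F2: False
      show ?thesis
      proof (cases "A + B' \<le> 1")
        case True
        have i1: "(0 + (A' - (1 - B'))) ^ n - 0 ^ n \<le> ((1 - B') + (A' - (1 - B'))) ^ n - (1 - B') ^ n"
          using inc_pow[of 0 "1 - B'" "A' - (1 - B')" n] assms True F1 by auto
        have "A ^ n \<le> (1 - B') ^ n" using assms True by (intro power_mono) auto
        then show ?thesis using i1 F1 F2 z pB by (simp add: max_def algebra_simps) (use z in linarith)
      next
        case False
        have i1: "(A + B' - 1 + (A' - A)) ^ n - (A + B' - 1) ^ n \<le> (A + (A' - A)) ^ n - A ^ n"
          using inc_pow[of "A + B' - 1" A "A' - A" n] assms False by auto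
        have i2: "(0 + (B' - (1 - A))) ^ n - 0 ^ n \<le> ((1 - A) + (B' - (1 - A))) ^ n - (1 - A) ^ n"
          using inc_pow[of 0 "1 - A" "B' - (1 - A)" n] assms False by auto
        have "B ^ n \<le> (1 - A) ^ n" using assms F2 by (intro power_mono) auto
        then show ?thesis using i1 i2 F1 F2 z by (simp add: max_def algebra_simps) (use z in linarith)
      qed
    qed
  qed
qed

lemma set_lin_borel[measurable]:
  "{x::real. c + s * x \<le> m} \<in> sets borel" "{x::real. m \<le> c + s * x} \<in> sets borel"
  "{x::real. \<bar>c + s * x\<bar> \<le> m} \<in> sets borel"
proof -
  have "{x \<in> space borel. c + s * x \<le> (m::real)} \<in> sets borel" by measurable
  then show "{x::real. c + s * x \<le> m} \<in> sets borel" by simp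
  have "{x \<in> space borel. m \<le> c + s * (x::real)} \<in> sets borel" by measurable
  then show "{x::real. m \<le> c + s * x} \<in> sets borel" by simp
  have "{x \<in> space borel. \<bar>c + s * x\<bar> \<le> (m::real)} \<in> sets borel" by measurable
  then show "{x::real. \<bar>c + s * x\<bar> \<le> m} \<in> sets borel" by simp
qed

lemma psi_split:
  "measure NN {x. \<bar>c + s * x\<bar> \<le> m} = max 0 (measure NN {x. c + s * x \<le> m} + measure NN {x. -m \<le> c + s * x} - 1)"
proof -
  interpret prob_space NN by (rule prob_NN)
  let ?S = "{x. c + s * x \<le> m}" and ?T = "{x. -m \<le> c + s * x}"
  have S: "?S \<in> sets NN" and T: "?T \<in> sets NN" by auto
  show ?thesis
  proof (cases "0 \<le> m")
    case True
    have "?S \<union> ?T = UNIV" using True by auto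
    then have u: "measure NN (?S \<union> ?T) = 1" using prob_space by simp
    have i: "?S \<inter> ?T = {x. \<bar>c + s * x\<bar> \<le> m}" by auto
    have "measure NN (?S \<union> ?T) = measure NN ?S + measure NN ?T - measure NN (?S \<inter> ?T)"
      using S T by (intro measure_Un3) (auto simp: fmeasurable_eq_sets)
    then have "measure NN ?S + measure NN ?T - 1 = measure NN {x. \<bar>c + s * x\<bar> \<le> m}" using u i by simp
    then show ?thesis using measure_nonneg[of NN "{x. \<bar>c + s * x\<bar> \<le> m}"] by (simp add: max_def)
  next
    case False
    then have e: "{x. \<bar>c + s * x\<bar> \<le> m} = {}" by auto
    have "measure NN (?S \<union> ?T) = measure NN ?S + measure NN ?T"
      using S T False by (intro measure_Union) auto
    moreover have "measure NN (?S \<union> ?T) \<le> 1" by (rule prob_le_1)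
    ultimately show ?thesis using e by (simp add: max_def)
  qed
qed

lemma meas_PA[measurable]:
  "(\<lambda>z. measure NN {x. a * z + s * x \<le> m}) \<in> borel_measurable borel"
proof -
  interpret prob_space NN by (rule prob_NN)
  show ?thesis
  proof (rule measurable_measure)
    have "{z \<in> space (borel \<Otimes>\<^sub>M borel). a * fst z + s * snd z \<le> (m::real)} \<in> sets (borel \<Otimes>\<^sub>M borel)"
      by measurable
    then show "{x \<in> space (borel \<Otimes>\<^sub>M NN). snd x \<in> {y. a * fst x + s * y \<le> m}} \<in> sets (borel \<Otimes>\<^sub>M NN)"
      by (simp add: space_pair_measure sets_pair_measure_cong[OF refl sets_NN])
  qed auto
qed

lemma meas_PB[measurable]:
  "(\<lambda>z. measure NN {x. m \<le> a * z + s * x}) \<in> borel_measurable borel"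
proof -
  interpret prob_space NN by (rule prob_NN)
  show ?thesis
  proof (rule measurable_measure)
    have "{z \<in> space (borel \<Otimes>\<^sub>M borel). (m::real) \<le> a * fst z + s * snd z} \<in> sets (borel \<Otimes>\<^sub>M borel)"
      by measurable
    then show "{x \<in> space (borel \<Otimes>\<^sub>M NN). snd x \<in> {y. m \<le> a * fst x + s * y}} \<in> sets (borel \<Otimes>\<^sub>M NN)"
      by (simp add: space_pair_measure sets_pair_measure_cong[OF refl sets_NN])
  qed auto
qed

lemma intg_NN:
  fixes f :: "real \<Rightarrow> real" and B :: real
  assumes [measurable]: "f \<in> borel_measurable borel" and "\<And>x. \<bar>f x\<bar> \<le> B"
  shows "integrable NN f"
proof -
  interpret prob_space NN by (rule prob_NN)
  show ?thesis by (rule integrable_const_bound[where B=B]) (use assms in auto)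
qed

lemma meas_le1: "measure NN A \<le> 1"
proof -
  interpret prob_space NN by (rule prob_NN)
  show ?thesis by (rule prob_le_1)
qed

lemma annulus:
  assumes a0: "0 < a0" and d: "0 \<le> d" and n: "1 \<le> n"
  shows "integral\<^sup>L NN (\<lambda>z. (measure NN {x. \<bar>a0 * z + s0 * x\<bar> \<le> m + d}) ^ n)
       \<le> integral\<^sup>L NN (\<lambda>z. (measure NN {x. \<bar>a0 * z + s0 * x\<bar> \<le> m}) ^ n) + d / a0"
proof -
  define h where "h = d / a0"
  have h: "0 \<le> h" using a0 d by (simp add: h_def)
  define P where "P = (\<lambda>z. (measure NN {x. \<bar>a0 * z + s0 * x\<bar> \<le> m}) ^ n)"
  define Q where "Q = (\<lambda>z. (measure NN {x. \<bar>a0 * z + s0 * x\<bar> \<le> m + d}) ^ n)"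
  define GA where "GA = (\<lambda>z. (measure NN {x. a0 * z + s0 * x \<le> m}) ^ n)"
  define GB where "GB = (\<lambda>z. (measure NN {x. -m \<le> a0 * z + s0 * x}) ^ n)"
  have [measurable]: "P \<in> borel_measurable borel" "Q \<in> borel_measurable borel"
    "GA \<in> borel_measurable borel" "GB \<in> borel_measurable borel"
    unfolding P_def Q_def GA_def GB_def
    by (rule borel_measurable_power[OF meas_Pz] borel_measurable_power[OF meas_PA] borel_measurable_power[OF meas_PB])+
  have [measurable]: "(\<lambda>z. GA (z - h)) \<in> borel_measurable borel" "(\<lambda>z. GB (z + h)) \<in> borel_measurable borel"
    by measurable
  have b: "\<And>f z. 0 \<le> (measure NN f) ^ n \<and> (measure NN f) ^ n \<le> 1"
    using meas_le1 by (auto intro: power_le_one)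
  have iP: "integrable NN P" by (rule intg_NN[where B=1], measurable) (auto simp: P_def b abs_le_iff)
  have iQ: "integrable NN Q" by (rule intg_NN[where B=1], measurable) (auto simp: Q_def b abs_le_iff)
  have iGA: "integrable NN GA" by (rule intg_NN[where B=1], measurable) (auto simp: GA_def b abs_le_iff)
  have iGB: "integrable NN GB" by (rule intg_NN[where B=1], measurable) (auto simp: GB_def b abs_le_iff)
  have iGA': "integrable NN (\<lambda>z. GA (z - h))" by (rule intg_NN[where B=1], measurable) (auto simp: GA_def b abs_le_iff)
  have iGB': "integrable NN (\<lambda>z. GB (z + h))" by (rule intg_NN[where B=1], measurable) (auto simp: GB_def b abs_le_iff)
  have pt: "Q z \<le> P z + (GA (z - h) - GA z) + (GB (z + h) - GB z)" for z
  proof -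
    define A where "A = measure NN {x. a0 * z + s0 * x \<le> m}"
    define A' where "A' = measure NN {x. a0 * z + s0 * x \<le> m + d}"
    define B where "B = measure NN {x. -m \<le> a0 * z + s0 * x}"
    define B' where "B' = measure NN {x. -(m + d) \<le> a0 * z + s0 * x}"
    interpret prob_space NN by (rule prob_NN)
    have AA: "A \<le> A'" unfolding A_def A'_def using d by (intro finite_measure_mono) auto
    have BB: "B \<le> B'" unfolding B_def B'_def using d by (intro finite_measure_mono) auto
    have eA: "GA (z - h) = A' ^ n"
    proof -
      have "{x. a0 * (z - h) + s0 * x \<le> m} = {x. a0 * z + s0 * x \<le> m + d}"
        using a0 by (auto simp: h_def algebra_simps)
      then show ?thesis by (simp add: GA_def A'_def)
    qed
    have eB: "GB (z + h) = B' ^ n"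
    proof -
      have "{x. -m \<le> a0 * (z + h) + s0 * x} = {x. -(m + d) \<le> a0 * z + s0 * x}"
        using a0 by (auto simp: h_def algebra_simps)
      then show ?thesis by (simp add: GB_def B'_def)
    qed
    have "Q z = (max 0 (A' + B' - 1)) ^ n" unfolding Q_def A'_def B'_def by (subst psi_split) simp
    moreover have "P z = (max 0 (A + B - 1)) ^ n" unfolding P_def A_def B_def by (subst psi_split) simp
    moreover have "(max 0 (A' + B' - 1)) ^ n - (max 0 (A + B - 1)) ^ n \<le> (A' ^ n - A ^ n) + (B' ^ n - B ^ n)"
      by (rule alg_ineq) (use AA BB n meas_le1 in \<open>auto simp: A_def B'_def A'_def B_def\<close>)
    ultimately show ?thesis using eA eB by (simp add: GA_def GB_def A_def B_def)
  qed
  have "integral\<^sup>L NN Q \<le> integral\<^sup>L NN (\<lambda>z. P z + (GA (z - h) - GA z) + (GB (z + h) - GB z))"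
    by (rule integral_mono) (use iP iQ iGA iGB iGA' iGB' pt in auto)
  also have "\<dots> = integral\<^sup>L NN P + (integral\<^sup>L NN (\<lambda>z. GA (z - h)) - integral\<^sup>L NN GA) + (integral\<^sup>L NN (\<lambda>z. GB (z + h)) - integral\<^sup>L NN GB)"
    using iP iGA iGB iGA' iGB' by simp
  also have "\<dots> \<le> integral\<^sup>L NN P + h / 2 + h / 2"
    using shift_le[of GA h] shift_le2[of GB h] h b by (auto simp: GA_def GB_def)
  finally show ?thesis by (simp add: P_def Q_def h_def)
qed

lemma upper:
  assumes K: "0 \<le> K" and T: "0 \<le> T" and d: "\<bar>a - a'\<bar> * K + \<bar>s - s'\<bar> * T \<le> d"
  shows "integral\<^sup>L NN (\<lambda>z. (measure NN {x. \<bar>a * z + s * x\<bar> \<le> m}) ^ n)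
     \<le> integral\<^sup>L NN (\<lambda>z. (measure NN {x. \<bar>a' * z + s' * x\<bar> \<le> m + d}) ^ n)
        + real n * measure NN {x. T < \<bar>x\<bar>} + measure NN {x. K < \<bar>x\<bar>}"
proof -
  interpret prob_space NN by (rule prob_NN)
  define R where "R = (\<lambda>z. (measure NN {x. \<bar>a * z + s * x\<bar> \<le> m}) ^ n)"
  define Q where "Q = (\<lambda>z. (measure NN {x. \<bar>a' * z + s' * x\<bar> \<le> m + d}) ^ n)"
  define pT where "pT = measure NN {x. T < \<bar>x\<bar>}"
  have [measurable]: "R \<in> borel_measurable borel" "Q \<in> borel_measurable borel"
    unfolding R_def Q_def by (rule borel_measurable_power[OF meas_Pz])+
  have b: "\<And>f. 0 \<le> (measure NN f) ^ n \<and> (measure NN f) ^ n \<le> 1"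
    using meas_le1 by (auto intro: power_le_one)
  have iR: "integrable NN R" by (rule intg_NN[where B=1], measurable) (auto simp: R_def b abs_le_iff)
  have iQ: "integrable NN Q" by (rule intg_NN[where B=1], measurable) (auto simp: Q_def b abs_le_iff)
  have Kset: "{z::real. K < \<bar>z\<bar>} \<in> sets borel"
  proof -
    have "{z \<in> space borel. K < \<bar>z::real\<bar>} \<in> sets borel" by measurable
    then show ?thesis by simp
  qed
  have iI: "integrable NN (indicator {z. K < \<bar>z\<bar>} :: real \<Rightarrow> real)"
    by (rule intg_NN[where B=1]) (use Kset in \<open>auto split: split_indicator\<close>)
  have pt: "R z \<le> Q z + real n * pT + indicator {z. K < \<bar>z\<bar>} z" for z
  proof (cases "\<bar>z\<bar> \<le> K")
    case True
    have c: "measure NN {x. \<bar>a * z + s * x\<bar> \<le> m} \<le> measure NN {x. \<bar>a' * z + s' * x\<bar> \<le> m + d} + pT"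
      unfolding pT_def by (rule compare_pt[OF True T d])
    have "R z \<le> Q z + real n * pT"
      unfolding R_def Q_def
      by (rule pow_le_add) (use c meas_le1 in \<open>auto simp: pT_def\<close>)
    then show ?thesis using True by simp
  next
    case False
    have "R z \<le> 1" using b by (simp add: R_def)
    moreover have "0 \<le> Q z" using b by (simp add: Q_def)
    moreover have "0 \<le> real n * pT" by (simp add: pT_def)
    ultimately show ?thesis using False by simp
  qed
  have "integral\<^sup>L NN R \<le> integral\<^sup>L NN (\<lambda>z. Q z + real n * pT + indicator {z. K < \<bar>z\<bar>} z)"
    by (rule integral_mono) (use iR iQ iI pt in auto)
  also have "\<dots> = integral\<^sup>L NN Q + real n * pT + measure NN {z. K < \<bar>z\<bar>}"
    using iQ iI prob_space by simp
  finally show ?thesis by (simp add: R_def Q_def pT_def)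
qed

lemma main_bound:
  assumes rho: "0 < rho" "rho < 1" and r: "0 \<le> r" "r < 1" and n: "1 \<le> n"
    and K: "0 \<le> K" and T: "0 \<le> T"
  shows "\<bar>mix_integral n r m - mix_integral n rho m\<bar>
    \<le> (\<bar>sqrt r - sqrt rho\<bar> * K + \<bar>sqrt (1 - r) - sqrt (1 - rho)\<bar> * T) / sqrt rho
       + real n * measure NN {x. T < \<bar>x\<bar>} + measure NN {x. K < \<bar>x\<bar>}"
proof -
  define d where "d = \<bar>sqrt r - sqrt rho\<bar> * K + \<bar>sqrt (1 - r) - sqrt (1 - rho)\<bar> * T"
  have d0: "0 \<le> d" using K T by (simp add: d_def)
  have a0: "0 < sqrt rho" using rho by simp
  define E where "E = real n * measure NN {x. T < \<bar>x\<bar>} + measure NN {x. K < \<bar>x\<bar>}"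
  let ?I = "\<lambda>a s m. integral\<^sup>L NN (\<lambda>z. (measure NN {x. \<bar>a * z + s * x\<bar> \<le> m}) ^ n)"
  have u1: "?I (sqrt r) (sqrt (1 - r)) m \<le> ?I (sqrt rho) (sqrt (1 - rho)) (m + d) + E"
    using upper[OF K T, of "sqrt r" "sqrt rho" "sqrt (1 - r)" "sqrt (1 - rho)" d m n]
    by (simp add: d_def E_def add.assoc)
  have u2: "?I (sqrt rho) (sqrt (1 - rho)) (m + d) \<le> ?I (sqrt rho) (sqrt (1 - rho)) m + d / sqrt rho"
    by (rule annulus[OF a0 d0 n])
  have l1: "?I (sqrt rho) (sqrt (1 - rho)) (m - d) \<le> ?I (sqrt r) (sqrt (1 - r)) (m - d + d) + E"
    using upper[OF K T, of "sqrt rho" "sqrt r" "sqrt (1 - rho)" "sqrt (1 - r)" d "m - d" n]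
    by (simp add: d_def E_def add.assoc abs_minus_commute)
  have l2: "?I (sqrt rho) (sqrt (1 - rho)) (m - d + d) \<le> ?I (sqrt rho) (sqrt (1 - rho)) (m - d) + d / sqrt rho"
    by (rule annulus[OF a0 d0 n])
  have mm: "m - d + d = m" by simp
  have e1: "mix_integral n r m = ?I (sqrt r) (sqrt (1 - r)) m" by (rule mix_eq[OF r])
  have e2: "mix_integral n rho m = ?I (sqrt rho) (sqrt (1 - rho)) m" by (rule mix_eq) (use rho in auto)
  have "\<bar>mix_integral n r m - mix_integral n rho m\<bar> \<le> d / sqrt rho + E"
    unfolding e1 e2 using u1 u2 l1[unfolded mm] l2[unfolded mm] by (intro abs_leI) linarith+
  then show ?thesis by (simp add: d_def E_def add.assoc)
qed



lemma L_ge1: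
  assumes "2 \<le> n"
  shows "1 \<le> sqrt (2 * ln (real n))"
proof -
  have "ln 2 \<le> ln (real n)" using assms by simp
  then have "1 \<le> 2 * ln (real n)" using ln2_ge_two_thirds by linarith
  then show ?thesis by simp
qed

lemma tail_n:
  assumes "2 \<le> n"
  shows "real n * (2 * exp (- (2 * sqrt (2 * ln (real n)))\<^sup>2 / 2)) \<le> 2 / real n"
proof -
  have n0: "0 < real n" using assms by simp
  have l: "0 \<le> ln (real n)" using assms by simp
  have "(2 * sqrt (2 * ln (real n)))\<^sup>2 / 2 = 4 * ln (real n)"
    using l by (simp add: power_mult_distrib)
  moreover have "exp (4 * ln (real n)) = real n ^ 4"
    using exp_of_nat_mult[of 4 "ln (real n)"] n0 by simp
  ultimately have e: "exp (- (2 * sqrt (2 * ln (real n)))\<^sup>2 / 2) = 1 / real n ^ 4"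
    by (simp add: exp_minus field_simps)
  have "real n * (2 * (1 / real n ^ 4)) = 2 / real n ^ 3"
    using n0 by (simp add: field_simps power_eq_if)
  also have "\<dots> \<le> 2 / real n"
  proof -
    have "real n \<le> real n ^ 3" using assms by (simp add: power_increasing[of 1 3, simplified])
    then show ?thesis using n0 by (intro divide_left_mono) auto
  qed
  finally show ?thesis using e by simp
qed

lemma K_bound:
  fixes eta :: real
  assumes "0 < eta"
  shows "2 * exp (- (4 / sqrt eta)\<^sup>2 / 2) \<le> eta / 4"
proof -
  have sq: "- (4 / sqrt eta)\<^sup>2 / 2 = - (8 / eta)" using assms by (simp add: power_divide)
  have "1 + 8 / eta \<le> exp (8 / eta)" by (rule exp_ge_add_one_self)
  then have "8 / eta \<le> exp (8 / eta)" by linarith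
  then have "2 / exp (8 / eta) \<le> 2 / (8 / eta)" using assms by (intro divide_left_mono) auto
  also have "\<dots> = eta / 4" by simp
  finally have f: "2 / exp (8 / eta) \<le> eta / 4" .
  have "2 * exp (- (8 / eta)) = 2 / exp (8 / eta)" by (simp add: exp_minus divide_inverse)
  then show ?thesis unfolding sq using f by simp
qed

lemma a_bound:
  assumes "0 < rho" "rho < 1" "0 \<le> r" "r \<le> 1"
  shows "\<bar>sqrt r - sqrt rho\<bar> \<le> 2 * \<bar>sqrt (1 - r) - sqrt (1 - rho)\<bar> / sqrt rho"
proof -
  have e1: "\<bar>sqrt r - sqrt rho\<bar> * (sqrt r + sqrt rho) = \<bar>r - rho\<bar>"
  proof -
    have "(sqrt r - sqrt rho) * (sqrt r + sqrt rho) = r - rho" using assms by (simp add: algebra_simps)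
    moreover have "0 \<le> sqrt r + sqrt rho" using assms by simp
    ultimately show ?thesis by (metis abs_mult abs_of_nonneg)
  qed
  have e2: "\<bar>sqrt (1 - r) - sqrt (1 - rho)\<bar> * (sqrt (1 - r) + sqrt (1 - rho)) = \<bar>r - rho\<bar>"
  proof -
    have "(sqrt (1 - r) - sqrt (1 - rho)) * (sqrt (1 - r) + sqrt (1 - rho)) = rho - r" using assms by (simp add: algebra_simps)
    moreover have "0 \<le> sqrt (1 - r) + sqrt (1 - rho)" using assms by simp
    ultimately show ?thesis by (metis abs_mult abs_of_nonneg abs_minus_commute)
  qed
  have "sqrt (1 - r) + sqrt (1 - rho) \<le> 2" using assms by (smt (verit) real_sqrt_le_1_iff)
  then have "\<bar>r - rho\<bar> \<le> 2 * \<bar>sqrt (1 - r) - sqrt (1 - rho)\<bar>"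
    using e2 by (metis abs_ge_zero mult.commute mult_left_mono)
  moreover have "\<bar>sqrt r - sqrt rho\<bar> * sqrt rho \<le> \<bar>sqrt r - sqrt rho\<bar> * (sqrt r + sqrt rho)"
    using assms by (intro mult_left_mono) auto
  ultimately have "\<bar>sqrt r - sqrt rho\<bar> * sqrt rho \<le> 2 * \<bar>sqrt (1 - r) - sqrt (1 - rho)\<bar>" using e1 by linarith
  then show ?thesis using assms by (simp add: field_simps)
qed

theorem theorem2:
  fixes M :: "'a measure"
    and rho :: real
    and X :: "nat \<Rightarrow> 'a \<Rightarrow> nat \<Rightarrow> real"
    and g :: "nat \<Rightarrow> (nat \<Rightarrow> real) \<Rightarrow> real"
  assumes "prob_space M"
    and "0 < rho" and "rho < 1"
    and "\<And>n. equicorr_gaussian M n rho (X n)"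
    and "\<And>n. g n \<in> borel_measurable (PiM {1..n} (\<lambda>_. borel))"
    and "\<And>n \<omega>. \<omega> \<in> space M \<Longrightarrow> g n (restrict (X n \<omega>) {1..n}) \<in> {0..<1}"
    and "conv_in_prob_zero M (\<lambda>n \<omega>. sqrt (2 * ln (real n)) *
           (sqrt (1 - rho) - sqrt (1 - g n (restrict (X n \<omega>) {1..n}))))"
  shows "conv_in_prob_zero M (\<lambda>n \<omega>.
           \<bar>mix_integral n rho (max_abs n (X n \<omega>))
            - mix_integral n (g n (restrict (X n \<omega>) {1..n})) (max_abs n (X n \<omega>))\<bar>)
       \<and> conv_in_prob_zero M (\<lambda>n \<omega>.
           p0 n rho (max_abs n (X n \<omega>))
            - p0 n (g n (restrict (X n \<omega>) {1..n})) (max_abs n (X n \<omega>)))"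
proof -
  interpret M: prob_space M by (rule assms(1))
  have rho: "0 < rho" "rho < 1" using assms(2,3) by auto
  define gh where "gh n \<omega> = g n (restrict (X n \<omega>) {1..n})" for n \<omega>
  define D where "D n \<omega> = mix_integral n rho (max_abs n (X n \<omega>)) - mix_integral n (gh n \<omega>) (max_abs n (X n \<omega>))" for n \<omega>
  define Y where "Y n \<omega> = sqrt (2 * ln (real n)) * (sqrt (1 - rho) - sqrt (1 - gh n \<omega>))" for n \<omega>
  have hyp: "\<And>e. 0 < e \<Longrightarrow> (\<lambda>n. measure M {\<omega> \<in> space M. e < \<bar>Y n \<omega>\<bar>}) \<longlonglongrightarrow> 0"
    using assms(7) unfolding conv_in_prob_zero_def Y_def gh_def by auto
  have meas_gh[measurable]: "gh n \<in> borel_measurable M" for n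
  proof -
    have "(\<lambda>\<omega>. restrict (X n \<omega>) {1..n}) \<in> M \<rightarrow>\<^sub>M PiM {1..n} (\<lambda>_. borel)"
      using assms(4)[of n] unfolding equicorr_gaussian_def
      by (intro measurable_restrict) auto
    then show ?thesis unfolding gh_def by (rule measurable_compose) (rule assms(5))
  qed
  have Ymeas: "{\<omega> \<in> space M. e < \<bar>Y n \<omega>\<bar>} \<in> sets M" for e n
    unfolding Y_def by measurable
  have key: "(\<lambda>n. measure M {\<omega> \<in> space M. eta < \<bar>D n \<omega>\<bar>}) \<longlonglongrightarrow> 0" if eta: "0 < eta" for eta
  proof -
    define K where "K = 4 / sqrt eta"
    have K0: "0 \<le> K" using eta by (simp add: K_def)
    have a0: "0 < sqrt rho" using rho by simp
    define eps where "eps = eta * rho / (8 * (K + sqrt rho))"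
    have "0 < K + sqrt rho" using K0 a0 by linarith
    then have eps: "0 < eps" using eta rho unfolding eps_def by (intro divide_pos_pos mult_pos_pos) auto
    obtain N :: nat where N: "8 / eta \<le> real N" using real_arch_simple by blast
    have ev: "eventually (\<lambda>n. measure M {\<omega> \<in> space M. eta < \<bar>D n \<omega>\<bar>} \<le> measure M {\<omega> \<in> space M. eps < \<bar>Y n \<omega>\<bar>}) sequentially"
      unfolding eventually_sequentially
    proof (intro exI[of _ "max 2 N"] allI impI)
      fix n assume n: "max 2 N \<le> n"
      have n2: "2 \<le> n" and nN: "N \<le> n" using n by auto
      show "measure M {\<omega> \<in> space M. eta < \<bar>D n \<omega>\<bar>} \<le> measure M {\<omega> \<in> space M. eps < \<bar>Y n \<omega>\<bar>}"
      proof (rule M.finite_measure_mono[OF _ Ymeas], safe)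
        fix \<omega> assume \<omega>: "\<omega> \<in> space M" and big: "eta < \<bar>D n \<omega>\<bar>"
        show "eps < \<bar>Y n \<omega>\<bar>"
        proof (rule ccontr)
          assume "\<not> eps < \<bar>Y n \<omega>\<bar>"
          then have small: "\<bar>Y n \<omega>\<bar> \<le> eps" by simp
          define r where "r = gh n \<omega>"
          have r: "0 \<le> r" "r < 1" using assms(6)[OF \<omega>] by (auto simp: r_def gh_def)
          define Ln where "Ln = sqrt (2 * ln (real n))"
          have Ln1: "1 \<le> Ln" unfolding Ln_def by (rule L_ge1[OF n2])
          define T where "T = 2 * Ln"
          have T0: "0 \<le> T" using Ln1 by (simp add: T_def)
          define m where "m = max_abs n (X n \<omega>)"
          define ds where "ds = \<bar>sqrt (1 - r) - sqrt (1 - rho)\<bar>"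
          have Yeq: "\<bar>Y n \<omega>\<bar> = Ln * ds"
            using Ln1 by (simp add: Y_def Ln_def ds_def r_def abs_mult abs_minus_commute)
          have Lds: "Ln * ds \<le> eps" using small Yeq by simp
          have ds0: "0 \<le> ds" by (simp add: ds_def)
          have dse: "ds \<le> eps"
          proof -
            have "1 * ds \<le> Ln * ds" using Ln1 ds0 by (intro mult_right_mono) auto
            then show ?thesis using Lds by simp
          qed
          have ab: "\<bar>sqrt r - sqrt rho\<bar> \<le> 2 * eps / sqrt rho"
          proof -
            have "\<bar>sqrt r - sqrt rho\<bar> \<le> 2 * ds / sqrt rho" unfolding ds_def
              by (rule a_bound) (use rho r in auto)
            also have "\<dots> \<le> 2 * eps / sqrt rho" using dse a0 by (intro divide_right_mono) auto
            finally show ?thesis .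
          qed
          have mb: "\<bar>mix_integral n r m - mix_integral n rho m\<bar>
            \<le> (\<bar>sqrt r - sqrt rho\<bar> * K + ds * T) / sqrt rho
               + real n * measure NN {x. T < \<bar>x\<bar>} + measure NN {x. K < \<bar>x\<bar>}"
            unfolding ds_def by (rule main_bound) (use rho r n2 K0 T0 in auto)
          have t1: "(\<bar>sqrt r - sqrt rho\<bar> * K + ds * T) / sqrt rho \<le> eta / 4"
          proof -
            have "\<bar>sqrt r - sqrt rho\<bar> * K \<le> (2 * eps / sqrt rho) * K" using ab K0 by (rule mult_right_mono)
            moreover have "ds * T \<le> 2 * eps" using Lds by (simp add: T_def algebra_simps)
            ultimately have "\<bar>sqrt r - sqrt rho\<bar> * K + ds * T \<le> 2 * eps / sqrt rho * K + 2 * eps" by linarith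
            then have "(\<bar>sqrt r - sqrt rho\<bar> * K + ds * T) / sqrt rho \<le> (2 * eps / sqrt rho * K + 2 * eps) / sqrt rho"
              using a0 by (intro divide_right_mono) auto
            also have "\<dots> = 2 * eps * (K + sqrt rho) / (sqrt rho * sqrt rho)"
              using a0 by (simp add: field_simps)
            also have "\<dots> = eta / 4"
            proof -
              have nz: "K + sqrt rho \<noteq> 0" using K0 a0 by linarith
              have "eps * (K + sqrt rho) = eta * rho / 8" unfolding eps_def using nz by (simp add: field_simps)
              moreover have sq: "sqrt rho * sqrt rho = rho" using rho by simp
              ultimately have "2 * eps * (K + sqrt rho) / (sqrt rho * sqrt rho) = 2 * (eta * rho / 8) / rho"
                by (simp only: mult.assoc)
              also have "\<dots> = eta / 4" using rho by (simp add: field_simps)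
              finally show ?thesis .
            qed
            finally show ?thesis .
          qed
          have t2: "real n * measure NN {x. T < \<bar>x\<bar>} \<le> eta / 4"
          proof -
            have "real n * measure NN {x. T < \<bar>x\<bar>} \<le> real n * (2 * exp (- T\<^sup>2 / 2))"
              using tail_abs[OF T0] by (intro mult_left_mono) auto
            also have "\<dots> \<le> 2 / real n" using tail_n[OF n2] by (simp add: T_def Ln_def)
            also have "\<dots> \<le> 2 / (8 / eta)"
            proof (rule divide_left_mono)
              show "8 / eta \<le> real n" using N nN by linarith
              show "0 < real n * (8 / eta)" using n2 eta by simp
            qed simp
            also have "\<dots> = eta / 4" by simp
            finally show ?thesis .
          qed
          have t3: "measure NN {x. K < \<bar>x\<bar>} \<le> eta / 4"
            using tail_abs[OF K0] K_bound[OF eta] by (simp add: K_def)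
          have "\<bar>D n \<omega>\<bar> = \<bar>mix_integral n r m - mix_integral n rho m\<bar>"
            by (simp add: D_def r_def m_def abs_minus_commute)
          then have "\<bar>D n \<omega>\<bar> \<le> 3 * eta / 4" using mb t1 t2 t3 by linarith
          then show False using big eta by linarith
        qed
      qed
    qed
    show ?thesis
      by (rule tendsto_sandwich[OF _ ev tendsto_const hyp[OF eps]]) simp
  qed
  have p0eq: "\<bar>p0 n rho (max_abs n (X n \<omega>)) - p0 n (gh n \<omega>) (max_abs n (X n \<omega>))\<bar> = \<bar>D n \<omega>\<bar>" for n \<omega>
    by (simp add: p0_def D_def abs_minus_commute)
  show ?thesis
    unfolding conv_in_prob_zero_def
    using key p0eq unfolding D_def gh_def by simp
qed

end
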